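(* Let $\Gamma$ be an automatic cross-section with generators $A$ and language of representatives $L$, let $\sigma:A^*\to S$ be an interpretation of $\Gamma$, and let $w\in A^*$. Then $\sigma(w)$ is right cancellable in $S$ if and only if $L_w\circ L_w^{-1}$ is the diagonal relation $\{(u,u):u\in L\}$ on $L$.
   Context: Let $A$ be a finite alphabet, $\$ \notin A$, and let $\delta$ send a pair of words over $A$ to the word over $(A\cup\{\$\})\times(A\cup\{\$\})$ obtained by padding the shorter word on the right with $\$$ and reading both letter by letter. A synchronous automaton recognises a relation $R$ if it accepts exactly $\delta(R)$. A pre-automatic structure $\Gamma$ consists of a finite alphabet $A$, a finite automaton recognising $L\subseteq A^*$, a synchronous automaton recognising $L_=\subseteq L\times L$, and for each $a\in A$ a synchronous automaton recognising $L_a\subseteq L\times L$. An interpretation with respect to a semigroup $S$ is a morphism $\sigma:A^*\to S$ with $\sigma(L)=S$ such that for $u,v\in L$: $(u,v)\in L_=$ iff $\sigma(u)=\sigma(v)$, and $(u,v)\in L_a$ iff $\sigma(ua)=\sigma(v)$. $\Gamma$ is an automatic cross-section (has uniqueness) if it admits an interpretation $\sigma$ whose restriction to $L$ is a bijection onto $S$. Composition of relations is left to right: $R\circ R'=\{(u,v):\exists x,\ (u,x)\in R,\ (x,v)\in R'\}$, and $R^{-1}=\{(v,u):(u,v)\in R\}$. For $w=a_1\cdots a_n$ with $n\ge1$, $a_i\in A$, set $L_w=L_{a_1}\circ\cdots\circ L_{a_n}$, and $L_\epsilon=L_=$ (so $L_w=\{(u,v)\in L\times L:\sigma(uw)=\sigma(v)\}$).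 An element $s\in S$ is right cancellable if $xs=ys$ implies $x=y$ for all $x,y\in S$. *)

theory Defs
  imports Main
begin

definition fa_recognises :: "'c set \<Rightarrow> 'c list set \<Rightarrow> bool" where
  "fa_recognises Alph Lang \<longleftrightarrow>
     (\<exists>(Q::nat set) q0 F t. finite Q \<and> q0 \<in> Q \<and> F \<subseteq> Q \<and>
        (\<forall>q\<in>Q. \<forall>x\<in>Alph. t q x \<in> Q) \<and>
        Lang = {w \<in> lists Alph. foldl t q0 w \<in> F})"

text \<open>Padding: the dollar symbol is represented by None, a letter a by Some a.\<close>

definition pad :: "'a list \<Rightarrow> 'a list \<Rightarrow> ('a option \<times> 'a option) list" where
  "pad u v = map (\<lambda>i. (if i < length u then Some (u ! i) else None,
                        if i < length v then Some (v ! i) else None))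
                 [0..<max (length u) (length v)]"

definition padded_alphabet :: "'a set \<Rightarrow> ('a option \<times> 'a option) set" where
  "padded_alphabet A = (insert None (Some ` A)) \<times> (insert None (Some ` A))"

definition sync_recognises :: "'a set \<Rightarrow> ('a list \<times> 'a list) set \<Rightarrow> bool" where
  "sync_recognises A R \<longleftrightarrow>
     R \<subseteq> lists A \<times> lists A \<and>
     fa_recognises (padded_alphabet A) ((\<lambda>(u, v). pad u v) ` R)"

definition pre_automatic ::
  "'a set \<Rightarrow> 'a list set \<Rightarrow> ('a list \<times> 'a list) set \<Rightarrow> ('a \<Rightarrow> ('a list \<times> 'a list) set) \<Rightarrow> bool" where
  "pre_automatic A L Leq La \<longleftrightarrow>
     finite A \<and> L \<subseteq> lists A \<and> fa_recognises A L \<and>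
     Leq \<subseteq> L \<times> L \<and> sync_recognises A Leq \<and>
     (\<forall>a\<in>A. La a \<subseteq> L \<times> L \<and> sync_recognises A (La a))"

text \<open>Interpretation with respect to the semigroup S (the whole type 'b):
  a morphism sigma from A^* to S with sigma(L) = S, respecting L_= and each L_a.\<close>

definition interpretation_of ::
  "'a set \<Rightarrow> 'a list set \<Rightarrow> ('a list \<times> 'a list) set \<Rightarrow> ('a \<Rightarrow> ('a list \<times> 'a list) set)
     \<Rightarrow> ('a list \<Rightarrow> 'b::semigroup_mult) \<Rightarrow> bool" where
  "interpretation_of A L Leq La sigma \<longleftrightarrow>
     (\<forall>u\<in>lists A. \<forall>v\<in>lists A. sigma (u @ v) = sigma u * sigma v) \<and>
     sigma ` L = UNIV \<and>
     (\<forall>u\<in>L. \<forall>v\<in>L. (u, v) \<in> Leq \<longleftrightarrow> sigma u = sigma v) \<and>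
     (\<forall>a\<in>A. \<forall>u\<in>L. \<forall>v\<in>L. (u, v) \<in> La a \<longleftrightarrow> sigma (u @ [a]) = sigma v)"

definition automatic_cross_section ::
  "'a set \<Rightarrow> 'a list set \<Rightarrow> ('a list \<times> 'a list) set \<Rightarrow> ('a \<Rightarrow> ('a list \<times> 'a list) set)
     \<Rightarrow> 'b::semigroup_mult itself \<Rightarrow> bool" where
  "automatic_cross_section A L Leq La (TYPE('b)) \<longleftrightarrow>
     pre_automatic A L Leq La \<and>
     (\<exists>tau :: 'a list \<Rightarrow> 'b. interpretation_of A L Leq La tau \<and> bij_betw tau L UNIV)"

text \<open>L_w: L_= for the empty word, L_{a1} o ... o L_{an} otherwise (composition left to right,
  which is Isabelle's relcomp O).\<close>

fun Lw :: "('a list \<times> 'a list) set \<Rightarrow> ('a \<Rightarrow> ('a list \<times> 'a list) set) \<Rightarrow> 'a list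
             \<Rightarrow> ('a list \<times> 'a list) set" where
  "Lw Leq La [] = Leq"
| "Lw Leq La [a] = La a"
| "Lw Leq La (a # b # w) = La a O Lw Leq La (b # w)"

definition right_cancellable :: "'b::semigroup_mult \<Rightarrow> bool" where
  "right_cancellable s \<longleftrightarrow> (\<forall>x y. x * s = y * s \<longrightarrow> x = y)"

end

theory Submission
  imports Defs
begin

lemma Lw_char:
  assumes LA: "L \<subseteq> lists A" and LeqL: "Leq \<subseteq> L \<times> L"
    and LaL: "\<forall>a\<in>A. La a \<subseteq> L \<times> L"
    and I: "interpretation_of A L Leq La (sigma :: 'a list \<Rightarrow> 'b::semigroup_mult)"
    and w: "w \<in> lists A"
  shows "Lw Leq La w = {(u,v). u \<in> L \<and> v \<in> L \<and> sigma (u @ w) = sigma v}"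
  using w
proof (induction w rule: induct_list012)
  case 1
  have e: "\<forall>u\<in>L. \<forall>v\<in>L. (u, v) \<in> Leq \<longleftrightarrow> sigma u = sigma v"
    using I unfolding interpretation_of_def by blast
  show ?case
  proof (rule set_eqI, clarify, rule iffI)
    fix u v assume "(u, v) \<in> Lw Leq La []"
    then show "(u, v) \<in> {(u, v). u \<in> L \<and> v \<in> L \<and> sigma (u @ []) = sigma v}"
      using e LeqL by auto
  qed (use e in auto)
next
  case (2 a)
  have aA: "a \<in> A" using "2" by simp
  have e: "\<forall>u\<in>L. \<forall>v\<in>L. (u, v) \<in> La a \<longleftrightarrow> sigma (u @ [a]) = sigma v"
    using I aA unfolding interpretation_of_def by blast
  have s: "La a \<subseteq> L \<times> L" using LaL aA by blast
  show ?case
  proof (rule set_eqI, clarify, rule iffI)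
    fix u v assume "(u, v) \<in> Lw Leq La [a]"
    then show "(u, v) \<in> {(u, v). u \<in> L \<and> v \<in> L \<and> sigma (u @ [a]) = sigma v}"
      using e s by auto
  qed (use e in auto)
next
  case (3 a b w)
  have mult: "\<forall>u\<in>lists A. \<forall>v\<in>lists A. sigma (u @ v) = sigma u * sigma v"
   and surj: "sigma ` L = UNIV"
   and la: "\<forall>a\<in>A. \<forall>u\<in>L. \<forall>v\<in>L. (u, v) \<in> La a \<longleftrightarrow> sigma (u @ [a]) = sigma v"
    using I unfolding interpretation_of_def by auto
  have aA: "a \<in> A" and bw: "b # w \<in> lists A" using "3.prems" by auto
  have IH: "Lw Leq La (b # w) = {(u,v). u \<in> L \<and> v \<in> L \<and> sigma (u @ b # w) = sigma v}"
    using "3.IH"(2) bw by simp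
  have key: "sigma (x @ b # w) = sigma (u @ a # b # w)" if "x \<in> L" "u \<in> L"
    "sigma x = sigma (u @ [a])" for x u
  proof -
    have xl: "x \<in> lists A" "u \<in> lists A" using that LA by auto
    have "sigma (x @ b # w) = sigma x * sigma (b # w)" using mult xl bw by auto
    also have "\<dots> = sigma (u @ [a]) * sigma (b # w)" using that by simp
    also have "\<dots> = sigma ((u @ [a]) @ b # w)" using mult[rule_format, of "u @ [a]" "b # w"] xl bw aA by simp
    finally show ?thesis by simp
  qed
  show ?case
  proof (rule set_eqI, clarify, rule iffI)
    fix u v assume "(u, v) \<in> Lw Leq La (a # b # w)"
    then obtain x where ux: "(u, x) \<in> La a" and xv: "(x, v) \<in> Lw Leq La (b # w)" by auto
    have "u \<in> L" "x \<in> L" using ux LaL aA by auto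
    moreover have "sigma (u @ [a]) = sigma x" using la aA ux calculation by blast
    ultimately show "(u, v) \<in> {(u, v). u \<in> L \<and> v \<in> L \<and> sigma (u @ a # b # w) = sigma v}"
      using xv IH key by auto
  next
    fix u v assume h: "(u, v) \<in> {(u, v). u \<in> L \<and> v \<in> L \<and> sigma (u @ a # b # w) = sigma v}"
    obtain x where x: "x \<in> L" "sigma x = sigma (u @ [a])" using surj by (metis UNIV_I imageE)
    have "(u, x) \<in> La a" using la aA x h by auto
    moreover have "(x, v) \<in> Lw Leq La (b # w)" using IH x h key by auto
    ultimately show "(u, v) \<in> Lw Leq La (a # b # w)" by auto
  qed
qed

theorem proposition3p2:
  fixes A :: "'a set" and L :: "'a list set"
    and Leq :: "('a list \<times> 'a list) set" and La :: "'a \<Rightarrow> ('a list \<times> 'a list) set"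
    and sigma :: "'a list \<Rightarrow> 'b::semigroup_mult" and w :: "'a list"
  assumes "automatic_cross_section A L Leq La TYPE('b)"
    and "interpretation_of A L Leq La sigma"
    and "w \<in> lists A"
  shows "right_cancellable (sigma w) \<longleftrightarrow> Lw Leq La w O (Lw Leq La w)\<inverse> = Id_on L"
proof -
  have pre: "pre_automatic A L Leq La" and
    tau: "\<exists>tau :: 'a list \<Rightarrow> 'b. interpretation_of A L Leq La tau \<and> bij_betw tau L UNIV"
    using assms(1) unfolding automatic_cross_section_def by auto
  have LA: "L \<subseteq> lists A" and LeqL: "Leq \<subseteq> L \<times> L" and LaL: "\<forall>a\<in>A. La a \<subseteq> L \<times> L"
    using pre unfolding pre_automatic_def by auto
  have mult: "\<forall>u\<in>lists A. \<forall>v\<in>lists A. sigma (u @ v) = sigma u * sigma v"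
   and surj: "sigma ` L = UNIV"
   and eq: "\<forall>u\<in>L. \<forall>v\<in>L. (u, v) \<in> Leq \<longleftrightarrow> sigma u = sigma v"
    using assms(2) unfolding interpretation_of_def by auto
  have inj: "u = v" if "u \<in> L" "v \<in> L" "sigma u = sigma v" for u v
  proof -
    obtain tau :: "'a list \<Rightarrow> 'b" where t: "interpretation_of A L Leq La tau" "bij_betw tau L UNIV"
      using tau by blast
    have "(u, v) \<in> Leq" using eq that by auto
    hence "tau u = tau v" using t(1) that unfolding interpretation_of_def by auto
    thus ?thesis using t(2) that unfolding bij_betw_def inj_on_def by auto
  qed
  have char: "Lw Leq La w = {(u,v). u \<in> L \<and> v \<in> L \<and> sigma (u @ w) = sigma v}"
    using Lw_char[OF LA LeqL LaL assms(2) assms(3)] .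
  have sw: "sigma (u @ w) = sigma u * sigma w" if "u \<in> L" for u
    using mult that LA assms(3) by auto
  have comp: "Lw Leq La w O (Lw Leq La w)\<inverse> =
      {(u,u'). u \<in> L \<and> u' \<in> L \<and> sigma u * sigma w = sigma u' * sigma w}"
  proof (rule set_eqI, clarify, rule iffI)
    fix u u' assume "(u, u') \<in> Lw Leq La w O (Lw Leq La w)\<inverse>"
    then show "(u, u') \<in> {(u,u'). u \<in> L \<and> u' \<in> L \<and> sigma u * sigma w = sigma u' * sigma w}"
      using char sw by auto
  next
    fix u u' assume h: "(u, u') \<in> {(u,u'). u \<in> L \<and> u' \<in> L \<and> sigma u * sigma w = sigma u' * sigma w}"
    obtain v where v: "v \<in> L" "sigma v = sigma u * sigma w" using surj by (metis UNIV_I imageE)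
    have "(u, v) \<in> Lw Leq La w" "(u', v) \<in> Lw Leq La w" using char sw h v by auto
    thus "(u, u') \<in> Lw Leq La w O (Lw Leq La w)\<inverse>" by auto
  qed
  show ?thesis
  proof
    assume rc: "right_cancellable (sigma w)"
    show "Lw Leq La w O (Lw Leq La w)\<inverse> = Id_on L"
      unfolding comp using rc inj unfolding right_cancellable_def Id_on_def by auto
  next
    assume h: "Lw Leq La w O (Lw Leq La w)\<inverse> = Id_on L"
    show "right_cancellable (sigma w)" unfolding right_cancellable_def
    proof (intro allI impI)
      fix x y assume xy: "x * sigma w = y * sigma w"
      obtain u where u: "u \<in> L" "sigma u = x" using surj by (metis UNIV_I imageE)
      obtain u' where u': "u' \<in> L" "sigma u' = y" using surj by (metis UNIV_I imageE)
      have "(u, u') \<in> Id_on L" using h comp u u' xy by auto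
      thus "x = y" using u u' by auto
    qed
  qed
qed

end
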